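(* For every integer $n\ge 3$ and every $x>0$, $$\frac{n-2}{n-1}<\frac{\bigl(\psi_2^{(n)}(x)\bigr)^2}{\psi_2^{(n-1)}(x)\,\psi_2^{(n+1)}(x)}<\frac{n}{n+1}.$$ Both bounds are sharp: the lower constant $\frac{n-2}{n-1}$ cannot be replaced by any larger constant and the upper constant $\frac{n}{n+1}$ cannot be replaced by any smaller constant, uniformly in $x>0$.
   Context: For an integer $n\ge 2$ and $x>0$, the poly-double gamma function is defined by $$\psi_2^{(n)}(x)=(-1)^{n+1}\,n!\sum_{k=0}^{\infty}\frac{1+k}{(x+k)^{n+1}} .$$ *)

theory Defs
  imports "HOL-Analysis.Analysis"
begin

definition psi2 :: "nat \<Rightarrow> real \<Rightarrow> real" where
  "psi2 n x = (-1) ^ (n + 1) * fact n * (\<Sum>k. (1 + real k) / (x + real k) ^ (n + 1))"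

end

theory Submission
  imports Defs "HOL-Probability.Distributions"
begin

definition Ef :: "real \<Rightarrow> nat \<Rightarrow> real \<Rightarrow> real" where
  "Ef a j t = (if 0 < t then t ^ j * exp (- (a * t)) else 0)"

lemma Ef_nonneg: "0 \<le> Ef a j t"
  by (simp add: Ef_def)

lemma Ef_measurable[measurable]: "Ef a j \<in> borel_measurable borel"
  unfolding Ef_def by measurable

lemma Ef_integral:
  assumes a: "0 < a"
  shows "has_bochner_integral lborel (Ef a j) (fact j / a ^ (j + 1))"
proof (rule has_bochner_integral_nn_integral)
  show "Ef a j \<in> borel_measurable lborel" by simp
  show "AE x in lborel. 0 \<le> Ef a j x" by (simp add: Ef_nonneg)
  show "0 \<le> fact j / a ^ (j + 1)" using a by simp
  have "(\<integral>\<^sup>+ x. ennreal (Ef a j x) \<partial>lborel) =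
        (\<integral>\<^sup>+ x. ennreal (1 / a) * ennreal (erlang_density 0 a x * x ^ j) \<partial>lborel)"
  proof (intro nn_integral_cong_AE eventually_mono[OF AE_lborel_singleton[of 0]])
    fix x :: real assume "x \<noteq> 0"
    then show "ennreal (Ef a j x) = ennreal (1 / a) * ennreal (erlang_density 0 a x * x ^ j)"
      using a by (auto simp: Ef_def erlang_density_def ennreal_mult'[symmetric] field_simps)
  qed
  also have "\<dots> = ennreal (1 / a) * (\<integral>\<^sup>+ x. ennreal (erlang_density 0 a x * x ^ j) \<partial>lborel)"
    by (intro nn_integral_cmult) auto
  also have "\<dots> = ennreal (1 / a) * ennreal (fact j / a ^ j)"
    using nn_integral_erlang_ith_moment[OF a, of 0 j] by simp
  also have "\<dots> = ennreal (fact j / a ^ (j + 1))"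
    using a by (simp add: ennreal_mult'[symmetric] field_simps)
  finally show "(\<integral>\<^sup>+ x. ennreal (Ef a j x) \<partial>lborel) = ennreal (fact j / a ^ (j + 1))" .
qed

lemma geo1: fixes q :: real assumes "\<bar>q\<bar> < 1"
  shows "(\<lambda>k. (1 + real k) * q ^ k) sums (1 / (1 - q)^2)"
  using geometric_deriv_sums[of q] assms by (simp add: add.commute)

lemma geo2a: fixes q :: real assumes "\<bar>q\<bar> < 1"
  shows "(\<lambda>k. ((1 + real k) * (2 + real k)) * q ^ k) sums (2 / (1 - q)^3)"
proof -
  have "(\<lambda>n. diffs (\<lambda>n. of_nat (Suc n)) n * q^n) sums (2 / (1 - q)^3)"
  proof (rule termdiffs_sums_strong[where K=1])
    fix z :: real assume "norm z < 1"
    thus "(\<lambda>n. of_nat (Suc n) * z^n) sums (1 / (1 - z)^2)" by (rule geometric_deriv_sums)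
  next
    show "((\<lambda>z. 1 / (1 - z)^2) has_field_derivative (2 / (1 - q)^3)) (at q)"
    proof -
      have "1 - q \<noteq> 0" using assms by auto
      then show ?thesis
        by (auto intro!: derivative_eq_intros simp: divide_simps power_eq_if)
    qed
  qed (use assms in auto)
  thus ?thesis unfolding diffs_def by (simp add: algebra_simps)
qed

lemma geo2: fixes q :: real assumes "\<bar>q\<bar> < 1"
  shows "(\<lambda>k. (real k * (1 + real k)) * q ^ k) sums (2 * q / (1 - q)^3)"
proof -
  have "(\<lambda>k. ((1 + real k) * (2 + real k)) * q ^ k - 2 * ((1 + real k) * q ^ k))
     sums (2 / (1 - q)^3 - 2 * (1 / (1 - q)^2))"
    by (intro sums_diff sums_mult geo1 geo2a assms)
  moreover have "2 / (1 - q)^3 - 2 * (1 / (1 - q)^2) = 2 * q / (1 - q)^3"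
  proof -
    have "1 - q \<noteq> 0" using assms by auto
    then show ?thesis by (simp add: divide_simps power_eq_if)
  qed
  ultimately show ?thesis by (simp add: algebra_simps)
qed


definition SS :: "nat \<Rightarrow> real \<Rightarrow> real" where
  "SS p x = (\<Sum>k. (1 + real k) / (x + real k) ^ p)"

definition NN :: "nat \<Rightarrow> real \<Rightarrow> real" where
  "NN j x = fact (j + 2) * SS (j + 3) x"

definition hN :: "real \<Rightarrow> nat \<Rightarrow> real \<Rightarrow> real" where
  "hN x j t = (if 0 < t then t ^ (j + 2) * exp (- (x * t)) / (1 - exp (- t))^2 else 0)"

definition dphi :: "real \<Rightarrow> real \<Rightarrow> real" where
  "dphi x t = x - 2 / t + 2 / (exp t - 1)"

definition hD :: "real \<Rightarrow> nat \<Rightarrow> real \<Rightarrow> real" where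
  "hD x j t = (if 0 < t then t ^ (j + 2) * exp (- (x * t)) / (1 - exp (- t))^2 * dphi x t else 0)"

lemma SS_summable:
  assumes x: "0 < x" and p: "3 \<le> p"
  shows "summable (\<lambda>k. (1 + real k) / (x + real k) ^ p)"
proof (rule summable_comparison_test'[where N=1])
  show "summable (\<lambda>k. 2 * inverse (real k ^ 2))"
    by (intro summable_mult inverse_power_summable) auto
  fix k :: nat assume k: "1 \<le> k"
  have kk: "(1::real) \<le> real k" using k by simp
  have "real k ^ 3 \<le> real k ^ p" using kk p by (intro power_increasing) auto
  also have "real k ^ p \<le> (x + real k) ^ p" using x by (intro power_mono) auto
  finally have h: "real k * real k ^ 2 \<le> (x + real k) ^ p" by (simp add: power_eq_if)
  have pos: "0 < real k * real k ^ 2" using kk by simp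
  have "(1 + real k) / (x + real k) ^ p \<le> (2 * real k) / (real k * real k ^ 2)"
    using h pos kk by (intro frac_le) auto
  also have "\<dots> = 2 * inverse (real k ^ 2)" using kk by (simp add: field_simps)
  finally show "norm ((1 + real k) / (x + real k) ^ p) \<le> 2 * inverse (real k ^ 2)"
    using x by simp
qed

lemma sum_Ef_integral:
  fixes c a :: "nat \<Rightarrow> real"
  assumes c: "\<And>k. 0 \<le> c k" and a: "\<And>k. 0 < a k"
    and ps: "\<And>t. summable (\<lambda>k. c k * Ef (a k) j t)"
    and iss: "summable (\<lambda>k. c k * (fact j / a k ^ (j + 1)))"
  shows "has_bochner_integral lborel (\<lambda>t. \<Sum>k. c k * Ef (a k) j t) (\<Sum>k. c k * (fact j / a k ^ (j + 1)))"
proof -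
  have hb: "\<And>k. has_bochner_integral lborel (\<lambda>t. c k * Ef (a k) j t) (c k * (fact j / a k ^ (j + 1)))"
    by (intro has_bochner_integral_mult_right Ef_integral a)
  have int: "\<And>k. integrable lborel (\<lambda>t. c k * Ef (a k) j t)"
    using hb by (auto simp: has_bochner_integral_iff)
  have nrm: "\<And>k t. norm (c k * Ef (a k) j t) = c k * Ef (a k) j t"
    using c by (simp add: Ef_nonneg)
  have ints: "\<And>k. integral\<^sup>L lborel (\<lambda>t. c k * Ef (a k) j t) = c k * (fact j / a k ^ (j + 1))"
    using hb by (auto simp: has_bochner_integral_iff)
  have A: "AE t in lborel. summable (\<lambda>k. norm (c k * Ef (a k) j t))"
    unfolding nrm by (simp add: ps)
  have B: "summable (\<lambda>k. \<integral>t. norm (c k * Ef (a k) j t) \<partial>lborel)"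
    unfolding nrm ints by (rule iss)
  show ?thesis
    using integrable_suminf[OF int A B] integral_suminf[OF int A B]
    using Ef_integral[OF a] by (simp add: has_bochner_integral_iff ints)
qed

lemma exp_shift: "exp (- ((x + real k) * t)) = exp (- (x * t)) * exp (- t) ^ k"
  by (simp add: exp_of_nat_mult[symmetric] exp_add[symmetric] algebra_simps)

lemma q_bounds: assumes t: "0 < (t::real)" shows "\<bar>exp (- t)\<bar> < 1"
proof -
  have "exp (- t) < 1" using exp_gt_one[OF t] by (simp add: exp_minus field_simps)
  then show ?thesis by simp
qed

lemma hN_sums:
  assumes t: "0 < t"
  shows "(\<lambda>k. (1 + real k) * Ef (x + real k) j t) sums (t ^ j * exp (- (x * t)) / (1 - exp (- t))^2)"
proof -
  have "(\<lambda>k. (t ^ j * exp (- (x * t))) * ((1 + real k) * exp (- t) ^ k)) sums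
        ((t ^ j * exp (- (x * t))) * (1 / (1 - exp (- t))^2))"
    by (intro sums_mult geo1 q_bounds t)
  then show ?thesis using t unfolding Ef_def exp_shift by (simp add: algebra_simps)
qed

lemma hN_eq: "hN x j t = (\<Sum>k. (1 + real k) * Ef (x + real k) (j + 2) t)"
proof (cases "0 < t")
  case True
  then show ?thesis using hN_sums[OF True, of x "j+2"] by (simp add: hN_def sums_iff)
next
  case False
  then show ?thesis by (simp add: hN_def Ef_def)
qed

lemma fcomm: "(\<lambda>k. (1 + real k) * (F / (x + real k) ^ p)) = (\<lambda>k. F * ((1 + real k) / (x + real k) ^ p))"
  by (auto simp: fun_eq_iff)

lemma e3: "j + 2 + 1 = j + (3::nat)" by simp

lemma hN_integral:
  assumes x: "0 < x"
  shows "has_bochner_integral lborel (hN x j) (NN j x)"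
proof -
  have "has_bochner_integral lborel (\<lambda>t. \<Sum>k. (1 + real k) * Ef (x + real k) (j + 2) t)
          (\<Sum>k. (1 + real k) * (fact (j + 2) / (x + real k) ^ (j + 2 + 1)))"
  proof (rule sum_Ef_integral)
    fix t :: real
    show "summable (\<lambda>k. (1 + real k) * Ef (x + real k) (j + 2) t)"
    proof (cases "0 < t")
      case True show ?thesis by (rule sums_summable[OF hN_sums[OF True]])
    next
      case False then show ?thesis by (simp add: Ef_def)
    qed
  next
    show "summable (\<lambda>k. (1 + real k) * (fact (j + 2) / (x + real k) ^ (j + 2 + 1)))"
      unfolding fcomm[of "fact (j+2)" x "j+2+1"]
      by (intro summable_mult SS_summable x) simp
  qed (use x in auto)
  moreover have "(\<Sum>k. (1 + real k) * (fact (j + 2) / (x + real k) ^ (j + 2 + 1))) = NN j x"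
    unfolding e3 fcomm[of "fact (j+2)" x "j+3"] NN_def SS_def
    by (rule suminf_mult) (intro SS_summable x, simp)
  ultimately show ?thesis by (simp add: hN_eq[abs_def])
qed




lemma hD_alg0:
  fixes t u P E x q :: real
  assumes "t \<noteq> 0" "u \<noteq> 0"
  shows "t * P * E / u^2 * (x - 2 / t + 2 * q / u) = t * P * E * (x * (1 / u^2) + 2 * q / u^3) - 2 * (P * E / u^2)"
  using assms by (simp add: field_simps power_eq_if)

lemma hD_alg:
  fixes t q E x et :: real
  assumes t: "0 < t" and q: "0 < q" "q < 1" and et: "et = 1 / q"
  shows "t ^ (j + 2) * E / (1 - q)^2 * (x - 2 / t + 2 / (et - 1)) =
         t ^ (j + 2) * E * (x * (1 / (1 - q)^2) + 2 * q / (1 - q)^3) - 2 * (t ^ (j + 1) * E / (1 - q)^2)"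
proof -
  have "et - 1 = (1 - q) / q" using q et by (simp add: field_simps)
  then have a: "2 / (et - 1) = 2 * q / (1 - q)" using q by simp
  have b: "t ^ (j + 2) = t * t ^ (j + 1)" by simp
  show ?thesis unfolding a b
    by (rule hD_alg0) (use t q in auto)
qed

lemma hD_sums1:
  assumes t: "0 < t"
  shows "(\<lambda>k. ((1 + real k) * (x + real k)) * Ef (x + real k) j t) sums
     (t ^ j * exp (- (x * t)) * (x * (1 / (1 - exp (- t))^2) + 2 * exp (- t) / (1 - exp (- t))^3))"
proof -
  have "(\<lambda>k. (t ^ j * exp (- (x * t))) * (x * ((1 + real k) * exp (- t) ^ k) + (real k * (1 + real k)) * exp (- t) ^ k)) sums
        ((t ^ j * exp (- (x * t))) * (x * (1 / (1 - exp (- t))^2) + 2 * exp (- t) / (1 - exp (- t))^3))"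
    by (intro sums_mult sums_add geo1 geo2 q_bounds t)
  then show ?thesis using t unfolding Ef_def exp_shift by (simp add: algebra_simps)
qed

lemma hD_eq: "hD x j t = (\<Sum>k. ((1 + real k) * (x + real k)) * Ef (x + real k) (j + 2) t)
                        - (\<Sum>k. (2 * (1 + real k)) * Ef (x + real k) (j + 1) t)"
proof (cases "0 < t")
  case True
  have s2: "(\<lambda>k. 2 * ((1 + real k) * Ef (x + real k) (j + 1) t)) sums
            (2 * (t ^ (j + 1) * exp (- (x * t)) / (1 - exp (- t))^2))"
    by (intro sums_mult hN_sums True)
  have q: "0 < exp (- t)" "exp (- t) < 1" using q_bounds[OF True] by auto
  have et: "exp t = 1 / exp (- t)" by (simp add: exp_minus inverse_eq_divide)
  have A: "(\<Sum>k. ((1 + real k) * (x + real k)) * Ef (x + real k) (j + 2) t) =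
     t ^ (j + 2) * exp (- (x * t)) * (x * (1 / (1 - exp (- t))^2) + 2 * exp (- t) / (1 - exp (- t))^3)"
    using hD_sums1[OF True, of x "j+2"] by (simp add: sums_iff)
  have B: "(\<Sum>k. (2 * (1 + real k)) * Ef (x + real k) (j + 1) t) =
     2 * (t ^ (j + 1) * exp (- (x * t)) / (1 - exp (- t))^2)"
    unfolding mult.assoc by (rule sums_unique[OF s2, symmetric])
  show ?thesis
    unfolding A B hD_def dphi_def using True hD_alg[OF True q et] by simp
next
  case False
  then show ?thesis by (simp add: hD_def Ef_def)
qed

lemma canc1: "(y::real) \<noteq> 0 \<Longrightarrow> (a * y) * (F / y ^ (p + 1)) = F * (a / y ^ p)"
  by (simp add: field_simps)

lemma canc2: "((2::real) * a) * (F / y ^ (p + 1 + 1)) = (2 * F) * (a / y ^ (p + 2))"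
  by (simp add: numeral_2_eq_2)

lemma hD_integral:
  assumes x: "0 < x" and j: "1 \<le> j"
  shows "has_bochner_integral lborel (hD x j) (real j * NN (j - 1) x)"
proof -
  have I1: "has_bochner_integral lborel (\<lambda>t. \<Sum>k. ((1 + real k) * (x + real k)) * Ef (x + real k) (j + 2) t)
          (\<Sum>k. ((1 + real k) * (x + real k)) * (fact (j + 2) / (x + real k) ^ (j + 2 + 1)))"
  proof (rule sum_Ef_integral)
    fix t :: real
    show "summable (\<lambda>k. ((1 + real k) * (x + real k)) * Ef (x + real k) (j + 2) t)"
    proof (cases "0 < t")
      case True show ?thesis by (rule sums_summable[OF hD_sums1[OF True]])
    next
      case False then show ?thesis by (simp add: Ef_def)
    qed
  next
    have e: "(\<lambda>k. ((1 + real k) * (x + real k)) * (fact (j + 2) / (x + real k) ^ (j + 2 + 1)))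
           = (\<lambda>k. fact (j + 2) * ((1 + real k) / (x + real k) ^ (j + 2)))"
      by (intro ext canc1) (smt (verit) of_nat_0_le_iff x)
    show "summable (\<lambda>k. ((1 + real k) * (x + real k)) * (fact (j + 2) / (x + real k) ^ (j + 2 + 1)))"
      unfolding e using j by (intro summable_mult SS_summable x) simp
  qed (use x in auto)
  have I2: "has_bochner_integral lborel (\<lambda>t. \<Sum>k. (2 * (1 + real k)) * Ef (x + real k) (j + 1) t)
          (\<Sum>k. (2 * (1 + real k)) * (fact (j + 1) / (x + real k) ^ (j + 1 + 1)))"
  proof (rule sum_Ef_integral)
    fix t :: real
    show "summable (\<lambda>k. (2 * (1 + real k)) * Ef (x + real k) (j + 1) t)"
    proof (cases "0 < t")
      case True show ?thesis
        unfolding mult.assoc by (rule sums_summable[OF sums_mult[OF hN_sums[OF True], of 2]])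
    next
      case False then show ?thesis by (simp add: Ef_def)
    qed
  next
    have e: "(\<lambda>k. (2 * (1 + real k)) * (fact (j + 1) / (x + real k) ^ (j + 1 + 1)))
           = (\<lambda>k. (2 * fact (j + 1)) * ((1 + real k) / (x + real k) ^ (j + 2)))"
      by (intro ext canc2)
    show "summable (\<lambda>k. (2 * (1 + real k)) * (fact (j + 1) / (x + real k) ^ (j + 1 + 1)))"
      unfolding e using j by (intro summable_mult SS_summable x) simp
  qed (use x in auto)
  have v1: "(\<Sum>k. ((1 + real k) * (x + real k)) * (fact (j + 2) / (x + real k) ^ (j + 2 + 1)))
           = fact (j + 2) * SS (j + 2) x"
  proof -
    have e: "(\<lambda>k. ((1 + real k) * (x + real k)) * (fact (j + 2) / (x + real k) ^ (j + 2 + 1)))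
           = (\<lambda>k. fact (j + 2) * ((1 + real k) / (x + real k) ^ (j + 2)))"
      by (intro ext canc1) (smt (verit) of_nat_0_le_iff x)
    show ?thesis unfolding e SS_def using j by (intro suminf_mult SS_summable x) simp
  qed
  have v2: "(\<Sum>k. (2 * (1 + real k)) * (fact (j + 1) / (x + real k) ^ (j + 1 + 1)))
           = (2 * fact (j + 1)) * SS (j + 2) x"
  proof -
    have e: "(\<lambda>k. (2 * (1 + real k)) * (fact (j + 1) / (x + real k) ^ (j + 1 + 1)))
           = (\<lambda>k. (2 * fact (j + 1)) * ((1 + real k) / (x + real k) ^ (j + 2)))"
      by (intro ext canc2)
    show ?thesis unfolding e SS_def using j by (intro suminf_mult SS_summable x) simp
  qed
  have "has_bochner_integral lborel (hD x j) (fact (j + 2) * SS (j + 2) x - (2 * fact (j + 1)) * SS (j + 2) x)"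
    using has_bochner_integral_diff[OF I1 I2] unfolding v1 v2 hD_eq[abs_def] .
  moreover have "fact (j + 2) * SS (j + 2) x - (2 * fact (j + 1)) * SS (j + 2) x = real j * NN (j - 1) x"
  proof -
    have "fact (j + 2) = (real j + 2) * (fact (j + 1) :: real)"
      by (simp add: fact_Suc[symmetric] add.commute)
    moreover have "NN (j - 1) x = fact (j + 1) * SS (j + 2) x"
      using j by (simp add: NN_def)
    ultimately show ?thesis by (simp add: algebra_simps)
  qed
  ultimately show ?thesis by simp
qed




lemma sh_ineq:
  fixes u :: real assumes u: "0 < u"
  shows "2 * u < exp u - exp (- u)"
proof -
  let ?f = "\<lambda>v::real. exp v - exp (- v) - 2 * v"
  have "?f 0 < ?f u"
  proof (rule DERIV_pos_imp_increasing_open[OF u])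
    fix v :: real assume v: "0 < v" "v < u"
    have "exp v \<noteq> 1" using v by simp
    then have "0 < (exp v - 1)^2 / exp v" by simp
    also have "(exp v - 1)^2 / exp v = exp v + exp (- v) - 2"
      by (simp add: power2_eq_square field_simps exp_minus)
    finally have pos: "0 < exp v + exp (- v) - 2" .
    show "\<exists>y. DERIV ?f v :> y \<and> 0 < y"
      apply (rule exI[of _ "exp v + exp (- v) - 2"])
      using pos by (auto intro!: derivative_eq_intros)
  next
    show "continuous_on {0..u} ?f" by (intro continuous_intros)
  qed
  then show ?thesis by simp
qed

lemma key_ineq:
  fixes t :: real assumes t: "0 < t"
  shows "t^2 * exp t < (exp t - 1)^2"
proof -
  have h: "t < exp (t/2) - exp (- (t/2))" using sh_ineq[of "t/2"] t by simp
  have e: "exp t - 1 = exp (t/2) * (exp (t/2) - exp (- (t/2)))"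
    by (simp add: algebra_simps exp_add[symmetric] exp_minus_inverse flip: exp_add)
  have "exp t = exp (t/2) ^ 2" by (simp add: exp_double[symmetric] power2_eq_square flip: exp_add)
  then have "t^2 * exp t = (exp (t/2) * t)^2" by (simp add: power_mult_distrib)
  also have "\<dots> < (exp (t/2) * (exp (t/2) - exp (- (t/2))))^2"
    using h t by (intro power_strict_mono mult_strict_left_mono) auto
  finally show ?thesis by (simp add: e)
qed

lemma g_incr:
  fixes s t :: real assumes s: "0 < s" and st: "s < t"
  shows "- 2 / s + 2 / (exp s - 1) < - 2 / t + 2 / (exp t - 1)"
proof (rule DERIV_pos_imp_increasing[OF st])
  fix v assume v: "s \<le> v" "v \<le> t"
  then have v0: "0 < v" using s by linarith
  have ne: "exp v - 1 \<noteq> 0" using v0 by simp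
  have ev: "0 < exp v - 1" using v0 by simp
  have "v^2 * exp v < (exp v - 1)^2" by (rule key_ineq[OF v0])
  then have pos: "0 < 2 / v^2 - 2 * exp v / (exp v - 1)^2"
    using v0 ev by (simp add: field_simps)
  show "\<exists>y. DERIV (\<lambda>v. - 2 / v + 2 / (exp v - 1)) v :> y \<and> 0 < y"
    apply (rule exI[of _ "2 / v^2 - 2 * exp v / (exp v - 1)^2"])
    using v0 ne pos by (auto intro!: derivative_eq_intros simp: power2_eq_square field_simps)
qed

lemma dphi_incr: "0 < s \<Longrightarrow> s < t \<Longrightarrow> dphi x s < dphi x t"
  using g_incr[of s t] by (simp add: dphi_def)

lemma SS_pos: assumes x: "0 < x" and p: "3 \<le> p" shows "0 < SS p x"
  unfolding SS_def
  by (rule suminf_pos2[where i=0, OF SS_summable[OF x p]]) (use x in auto)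

lemma NN_pos: "0 < x \<Longrightarrow> 0 < NN j x"
  by (simp add: NN_def SS_pos)

lemma not_AE_nonpos: "\<not> (AE t in lborel. (t::real) \<le> 0)"
proof
  assume "AE t in lborel. (t::real) \<le> 0"
  then have "AE t in lborel. \<not> (0 < t \<and> t < (1::real))" by (rule eventually_mono) auto
  moreover have "(AE t in lborel. \<not> (0 < t \<and> t < (1::real))) \<longleftrightarrow> emeasure lborel {0::real<..<1} = 0"
    by (rule AE_iff_measurable) auto
  ultimately show False by simp
qed

lemma chebyshev:
  assumes x: "0 < x" and m: "1 \<le> m"
  shows "real m * NN (m - 1) x * NN (m + 1) x < (real m + 1) * (NN m x)^2"
proof -
  define \<tau> where "\<tau> = NN (m + 1) x / NN m x"
  have Np: "0 < NN m x" by (rule NN_pos[OF x])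
  have tau: "\<tau> * NN m x = NN (m + 1) x" using Np by (simp add: \<tau>_def)
  have tpos: "0 < \<tau>" using Np NN_pos[OF x] by (simp add: \<tau>_def)
  define F where "F t = hD x (m + 1) t - \<tau> * hD x m t - dphi x \<tau> * hN x (m + 1) t
                        + \<tau> * dphi x \<tau> * hN x m t" for t
  have hb: "has_bochner_integral lborel F
     (real (m + 1) * NN (m + 1 - 1) x - \<tau> * (real m * NN (m - 1) x) - dphi x \<tau> * NN (m + 1) x
      + \<tau> * dphi x \<tau> * NN m x)"
    unfolding F_def[abs_def]
    by (intro has_bochner_integral_add has_bochner_integral_diff has_bochner_integral_mult_right
          hD_integral hN_integral x m) simp
  have val: "real (m + 1) * NN (m + 1 - 1) x - \<tau> * (real m * NN (m - 1) x) - dphi x \<tau> * NN (m + 1) x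
      + \<tau> * dphi x \<tau> * NN m x = (real m + 1) * NN m x - \<tau> * (real m * NN (m - 1) x)"
    using tau by (simp add: algebra_simps)
  have Fform: "F t = (if 0 < t then (t - \<tau>) * (dphi x t - dphi x \<tau>) *
                  (t ^ (m + 2) * exp (- (x * t)) / (1 - exp (- t))^2) else 0)" for t
  proof (cases "0 < t")
    case True
    define W where "W = t ^ (m + 2) * exp (- (x * t)) / (1 - exp (- t))^2"
    have a: "hD x (m + 1) t = t * W * dphi x t" using True
      by (simp add: hD_def W_def power_add mult_ac)
    have b: "hD x m t = W * dphi x t" using True by (simp add: hD_def W_def)
    have c: "hN x (m + 1) t = t * W" using True by (simp add: hN_def W_def power_add mult_ac)
    have d: "hN x m t = W" using True by (simp add: hN_def W_def)
    show ?thesis unfolding F_def a b c d W_def[symmetric] using True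
      by (simp add: algebra_simps)
  qed (simp add: F_def hD_def hN_def)
  have Fnn: "0 \<le> F t" for t
  proof (cases "0 < t")
    case True
    have "0 \<le> (t - \<tau>) * (dphi x t - dphi x \<tau>)"
    proof (cases t \<tau> rule: linorder_cases)
      case less then show ?thesis using dphi_incr[OF True less, of x]
        by (intro mult_nonpos_nonpos) auto
    next
      case greater then show ?thesis using dphi_incr[OF tpos greater, of x] by auto
    qed simp
    then show ?thesis using True by (simp add: Fform)
  qed (simp add: Fform)
  have Fpos: "0 < F t" if t: "0 < t" "t \<noteq> \<tau>" for t
  proof -
    have "0 < (t - \<tau>) * (dphi x t - dphi x \<tau>)"
    proof (cases t \<tau> rule: linorder_cases)
      case less then show ?thesis using dphi_incr[OF t(1) less, of x]
        by (intro mult_neg_neg) auto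
    next
      case greater then show ?thesis using dphi_incr[OF tpos greater, of x] by auto
    qed (use t in simp)
    moreover have "exp (- t) < 1" using q_bounds[OF t(1)] by simp
    ultimately show ?thesis using t by (simp add: Fform)
  qed
  have int: "integrable lborel F" using hb by (simp add: has_bochner_integral_iff)
  have "integral\<^sup>L lborel F \<noteq> 0"
  proof
    assume "integral\<^sup>L lborel F = 0"
    then have "AE t in lborel. F t = 0"
      using integral_nonneg_eq_0_iff_AE[OF int] Fnn by simp
    then have A: "AE t in lborel. F t = 0 \<and> t \<noteq> \<tau>"
      using AE_lborel_singleton[of \<tau>] by (rule eventually_conj)
    have "AE t in lborel. (t::real) \<le> 0"
    proof (rule eventually_mono[OF A])
      fix t :: real assume "F t = 0 \<and> t \<noteq> \<tau>"
      then show "t \<le> 0" using Fpos[of t] by (cases "0 < t") auto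
    qed
    then show False using not_AE_nonpos by simp
  qed
  moreover have "0 \<le> integral\<^sup>L lborel F" using Fnn by (simp add: integral_nonneg)
  ultimately have "0 < integral\<^sup>L lborel F" by simp
  then have "0 < (real m + 1) * NN m x - \<tau> * (real m * NN (m - 1) x)"
    using has_bochner_integral_integral_eq[OF hb] unfolding val by simp
  then have "0 < ((real m + 1) * NN m x - \<tau> * (real m * NN (m - 1) x)) * NN m x"
    using Np by (rule mult_pos_pos)
  also have "\<dots> = (real m + 1) * (NN m x)^2 - real m * NN (m - 1) x * NN (m + 1) x"
    by (subst tau[symmetric]) (simp add: algebra_simps power2_eq_square)
  finally show ?thesis by simp
qed




lemma cs_alg:
  fixes a y P \<tau> :: real
  assumes "y \<noteq> 0" "P \<noteq> 0"
  shows "a / (P * y^2) - 2 * \<tau> * (a / (P * y)) + \<tau>^2 * (a / P) = a / P * (1 / y - \<tau>)^2"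
  using assms by (simp add: field_simps power2_eq_square)

lemma cs:
  assumes x: "0 < x" and n: "3 \<le> n"
  shows "(SS (n + 1) x)^2 < SS n x * SS (n + 2) x"
proof -
  define S0 where "S0 = SS n x"
  define S1 where "S1 = SS (n + 1) x"
  define S2 where "S2 = SS (n + 2) x"
  define \<tau> where "\<tau> = S1 / S0"
  have S0p: "0 < S0" unfolding S0_def using SS_pos[OF x n] .
  have tau: "\<tau> * S0 = S1" using S0p by (simp add: \<tau>_def)
  let ?a = "\<lambda>p k. (1 + real k) / (x + real k) ^ p"
  have s0: "?a n sums S0" unfolding S0_def SS_def by (intro summable_sums SS_summable x n)
  have s1: "?a (n + 1) sums S1" unfolding S1_def SS_def by (intro summable_sums SS_summable x) (use n in simp)
  have s2: "?a (n + 2) sums S2" unfolding S2_def SS_def by (intro summable_sums SS_summable x) (use n in simp)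
  define f where "f k = ?a (n + 2) k - 2 * \<tau> * ?a (n + 1) k + \<tau>^2 * ?a n k" for k
  have fs: "f sums (S2 - 2 * \<tau> * S1 + \<tau>^2 * S0)"
    unfolding f_def[abs_def] by (intro sums_add sums_diff sums_mult s0 s1 s2)
  have fe: "f k = ?a n k * (1 / (x + real k) - \<tau>)^2" for k
  proof -
    have y: "x + real k \<noteq> 0" using x by (smt (verit) of_nat_0_le_iff)
    have P: "(x + real k) ^ n \<noteq> 0" using y by simp
    have "f k = (1 + real k) / ((x + real k) ^ n * (x + real k)^2) - 2 * \<tau> * ((1 + real k) / ((x + real k) ^ n * (x + real k)))
              + \<tau>^2 * ((1 + real k) / (x + real k) ^ n)"
      unfolding f_def by (simp add: power_add power2_eq_square mult_ac)
    also have "\<dots> = ?a n k * (1 / (x + real k) - \<tau>)^2" by (rule cs_alg[OF y P])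
    finally show ?thesis .
  qed
  have fnn: "0 \<le> f k" for k unfolding fe using x by simp
  have "\<exists>i. 1 / (x + real i) \<noteq> \<tau>"
  proof (cases "1 / x = \<tau>")
    case True
    have "1 / (x + 1) \<noteq> 1 / x" using x by (simp add: field_simps)
    then show ?thesis using True by (intro exI[of _ 1]) simp
  next
    case False then show ?thesis by (intro exI[of _ 0]) simp
  qed
  then obtain i where i: "1 / (x + real i) \<noteq> \<tau>" by blast
  have "0 < f i" unfolding fe using x i by (simp add: add_pos_nonneg)
  then have "0 < suminf f" by (intro suminf_pos2[OF sums_summable[OF fs] fnn])
  then have "0 < S2 - 2 * \<tau> * S1 + \<tau>^2 * S0" using fs by (simp add: sums_iff)
  then have "0 < (S2 - 2 * \<tau> * S1 + \<tau>^2 * S0) * S0" using S0p by simp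
  also have "\<dots> = S0 * S2 - S1^2"
    by (subst tau[symmetric])+ (simp add: algebra_simps power2_eq_square)
  finally show ?thesis unfolding S0_def S1_def S2_def by simp
qed

lemma s_facts:
  fixes t :: real assumes t: "0 < t"
  shows "0 < 1 - exp (- t)" "1 - exp (- t) < 1" "1 - exp (- t) \<le> t" "t \<le> (1 + t) * (1 - exp (- t))"
proof -
  show "0 < 1 - exp (- t)" "1 - exp (- t) < 1" using q_bounds[OF t] by auto
  show "1 - exp (- t) \<le> t" using exp_ge_add_one_self[of "- t"] by simp
  have "(1 + t) * exp (- t) \<le> exp t * exp (- t)"
    using exp_ge_add_one_self[of t] by (intro mult_right_mono) (auto simp: add.commute)
  then have "(1 + t) * exp (- t) \<le> 1" by (simp flip: exp_add)
  then show "t \<le> (1 + t) * (1 - exp (- t))" by (simp add: algebra_simps)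
qed

lemma Ef_int: "0 < a \<Longrightarrow> integrable lborel (Ef a j)"
  using Ef_integral by (auto simp: has_bochner_integral_iff)

lemma Ef_val: "0 < a \<Longrightarrow> integral\<^sup>L lborel (Ef a j) = fact j / a ^ (j + 1)"
  using Ef_integral by (auto simp: has_bochner_integral_iff)

lemma hN_int: "0 < x \<Longrightarrow> integrable lborel (hN x j)"
  using hN_integral by (auto simp: has_bochner_integral_iff)

lemma hN_val: "0 < x \<Longrightarrow> integral\<^sup>L lborel (hN x j) = NN j x"
  using hN_integral by (auto simp: has_bochner_integral_iff)

lemma NN_lower1:
  assumes x: "0 < x" shows "fact j / x ^ (j + 1) \<le> NN j x"
proof -
  have "integral\<^sup>L lborel (Ef x j) \<le> integral\<^sup>L lborel (hN x j)"
  proof (rule integral_mono[OF Ef_int[OF x] hN_int[OF x]])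
    fix t :: real show "Ef x j t \<le> hN x j t"
    proof (cases "0 < t")
      case True
      note s = s_facts[OF True]
      have "1 \<le> t^2 / (1 - exp (- t))^2"
        using s by (simp add: power_mono)
      then have "t ^ j * exp (- (x * t)) * 1 \<le> t ^ j * exp (- (x * t)) * (t^2 / (1 - exp (- t))^2)"
        using True by (intro mult_left_mono) auto
      then show ?thesis using True by (simp add: Ef_def hN_def power_add power2_eq_square mult_ac)
    qed (simp add: Ef_def hN_def)
  qed
  then show ?thesis using x by (simp add: Ef_val hN_val)
qed

lemma NN_lower2:
  assumes x: "0 < x" shows "fact (j + 2) / x ^ (j + 3) \<le> NN j x"
proof -
  have "integral\<^sup>L lborel (Ef x (j + 2)) \<le> integral\<^sup>L lborel (hN x j)"
  proof (rule integral_mono[OF Ef_int[OF x] hN_int[OF x]])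
    fix t :: real show "Ef x (j + 2) t \<le> hN x j t"
    proof (cases "0 < t")
      case True
      note s = s_facts[OF True]
      have "1 \<le> 1 / (1 - exp (- t))^2"
        using s by (simp add: power_le_one)
      then have "t ^ (j + 2) * exp (- (x * t)) * 1 \<le> t ^ (j + 2) * exp (- (x * t)) * (1 / (1 - exp (- t))^2)"
        using True by (intro mult_left_mono) auto
      then show ?thesis using True by (simp add: Ef_def hN_def)
    qed (simp add: Ef_def hN_def)
  qed
  then show ?thesis using x by (simp add: Ef_val hN_val eval_nat_numeral)
qed


lemma NN_upper1:
  assumes x: "0 < x"
  shows "NN j x \<le> fact j / x ^ (j + 1) + 2 * (fact (j + 1) / x ^ (j + 1 + 1)) + fact (j + 2) / x ^ (j + 2 + 1)"
proof -
  have hb: "has_bochner_integral lborel (\<lambda>t. Ef x j t + 2 * Ef x (j + 1) t + Ef x (j + 2) t)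
       (fact j / x ^ (j + 1) + 2 * (fact (j + 1) / x ^ (j + 1 + 1)) + fact (j + 2) / x ^ (j + 2 + 1))"
    by (intro has_bochner_integral_add has_bochner_integral_mult_right Ef_integral x)
  have "integral\<^sup>L lborel (hN x j) \<le> integral\<^sup>L lborel (\<lambda>t. Ef x j t + 2 * Ef x (j + 1) t + Ef x (j + 2) t)"
  proof (rule integral_mono[OF hN_int[OF x]])
    show "integrable lborel (\<lambda>t. Ef x j t + 2 * Ef x (j + 1) t + Ef x (j + 2) t)"
      using hb by (simp add: has_bochner_integral_iff)
    fix t :: real show "hN x j t \<le> Ef x j t + 2 * Ef x (j + 1) t + Ef x (j + 2) t"
    proof (cases "0 < t")
      case True
      note s = s_facts[OF True]
      have "t / (1 - exp (- t)) \<le> 1 + t" using s by (simp add: divide_le_eq)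
      then have "(t / (1 - exp (- t)))^2 \<le> (1 + t)^2"
        using s True by (intro power_mono) auto
      then have "t ^ j * exp (- (x * t)) * (t / (1 - exp (- t)))^2 \<le> t ^ j * exp (- (x * t)) * (1 + t)^2"
        using True by (intro mult_left_mono) auto
      then show ?thesis using True
        by (simp add: Ef_def hN_def power_add power2_eq_square algebra_simps power_divide)
    qed (simp add: Ef_def hN_def)
  qed
  then show ?thesis using has_bochner_integral_integral_eq[OF hb] x by (simp add: hN_val)
qed

lemma NN_upper2:
  assumes x: "0 < x"
  shows "NN j x \<le> fact (j + 2) / x ^ (j + 3) + 2 * (fact j + 2 * fact (j + 1) + fact (j + 2))"
proof -
  have x1: "0 < x + 1" using x by simp
  have hb: "has_bochner_integral lborel (\<lambda>t. Ef x (j + 2) t + 2 * (Ef (x + 1) j t + 2 * Ef (x + 1) (j + 1) t + Ef (x + 1) (j + 2) t))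
       (fact (j + 2) / x ^ (j + 2 + 1) + 2 * (fact j / (x + 1) ^ (j + 1) + 2 * (fact (j + 1) / (x + 1) ^ (j + 1 + 1)) + fact (j + 2) / (x + 1) ^ (j + 2 + 1)))"
    by (intro has_bochner_integral_add has_bochner_integral_mult_right Ef_integral x x1)
  have "integral\<^sup>L lborel (hN x j) \<le> integral\<^sup>L lborel (\<lambda>t. Ef x (j + 2) t + 2 * (Ef (x + 1) j t + 2 * Ef (x + 1) (j + 1) t + Ef (x + 1) (j + 2) t))"
  proof (rule integral_mono[OF hN_int[OF x]])
    show "integrable lborel (\<lambda>t. Ef x (j + 2) t + 2 * (Ef (x + 1) j t + 2 * Ef (x + 1) (j + 1) t + Ef (x + 1) (j + 2) t))"
      using hb by (simp add: has_bochner_integral_iff)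
    fix t :: real show "hN x j t \<le> Ef x (j + 2) t + 2 * (Ef (x + 1) j t + 2 * Ef (x + 1) (j + 1) t + Ef (x + 1) (j + 2) t)"
    proof (cases "0 < t")
      case True
      note s = s_facts[OF True]
      define S where "S = 1 - exp (- t)"
      define q where "q = exp (- t)"
      have S: "0 < S" "S < 1" "t \<le> (1 + t) * S" using s by (auto simp: S_def)
      have q: "q = 1 - S" "0 \<le> q" by (auto simp: S_def q_def)
      have "t / S \<le> 1 + t" using S by (simp add: divide_le_eq)
      then have r: "(t / S)^2 \<le> (1 + t)^2" using S True by (intro power_mono) auto
      have "t^2 / S^2 - t^2 = (t / S)^2 * (q * (1 + S))"
        unfolding q(1) using S by (simp add: field_simps power2_eq_square)
      also have "\<dots> \<le> (1 + t)^2 * (q * 2)"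
        using r S q by (intro mult_mono) auto
      finally have key: "t^2 / S^2 \<le> t^2 + 2 * q * (1 + t)^2" by (simp add: algebra_simps)
      have "t ^ j * exp (- (x * t)) * (t^2 / S^2) \<le> t ^ j * exp (- (x * t)) * (t^2 + 2 * q * (1 + t)^2)"
        using True key by (intro mult_left_mono) auto
      moreover have "exp (- ((x + 1) * t)) = exp (- (x * t)) * q"
        by (simp add: q_def algebra_simps flip: exp_add)
      ultimately show ?thesis using True
        by (simp add: Ef_def hN_def S_def[symmetric] power_add power2_eq_square algebra_simps)
    qed (simp add: Ef_def hN_def)
  qed
  also have "\<dots> = fact (j + 2) / x ^ (j + 2 + 1) + 2 * (fact j / (x + 1) ^ (j + 1) + 2 * (fact (j + 1) / (x + 1) ^ (j + 1 + 1)) + fact (j + 2) / (x + 1) ^ (j + 2 + 1))"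
    using has_bochner_integral_integral_eq[OF hb] .
  also have "\<dots> \<le> fact (j + 2) / x ^ (j + 3) + 2 * (fact j + 2 * fact (j + 1) + fact (j + 2))"
  proof -
    have d: "a / (x + 1) ^ p \<le> a" if a: "0 \<le> a" for a :: real and p
    proof -
      have "1 \<le> (x + 1) ^ p" by (rule one_le_power) (use x in simp)
      then have "a / (x + 1) ^ p \<le> a / 1" using a by (intro divide_left_mono) auto
      then show ?thesis by simp
    qed
    show ?thesis
      using d[of "fact j" "j + 1"] d[of "fact (j + 1)" "j + 1 + 1"] d[of "fact (j + 2)" "j + 2 + 1"]
      by (simp add: eval_nat_numeral)
  qed
  finally show ?thesis using x by (simp add: hN_val)
qed




lemma ex_small_lt:
  fixes B :: "real \<Rightarrow> real"
  assumes lim: "(B \<longlongrightarrow> L) (at_right 0)" and Lc: "L < c"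
  shows "\<exists>y>0. B y < c"
proof -
  have "eventually (\<lambda>y. B y < c) (at_right 0)" by (rule order_tendstoD(2)[OF lim Lc])
  then obtain b where b: "b > 0" "\<And>y. y > 0 \<Longrightarrow> y < b \<Longrightarrow> B y < c"
    unfolding eventually_at_right_field by auto
  then show ?thesis by (intro exI[of _ "b/2"]) auto
qed

lemma ex_small_gt:
  fixes B :: "real \<Rightarrow> real"
  assumes lim: "(B \<longlongrightarrow> L) (at_right 0)" and Lc: "c < L"
  shows "\<exists>y>0. c < B y"
proof -
  have "eventually (\<lambda>y. c < B y) (at_right 0)" by (rule order_tendstoD(1)[OF lim Lc])
  then obtain b where b: "b > 0" "\<And>y. y > 0 \<Longrightarrow> y < b \<Longrightarrow> c < B y"
    unfolding eventually_at_right_field by auto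
  then show ?thesis by (intro exI[of _ "b/2"]) auto
qed

lemma psi2_NN: "psi2 (j + 2) x = (-1) ^ (j + 3) * NN j x"
  unfolding psi2_def NN_def SS_def e3 by (simp only: mult.assoc)

lemma sign_alg:
  fixes s0 s1 s2 a b c :: real
  assumes "s1^2 = 1" "s0 * s2 = 1"
  shows "(s1 * a)^2 / ((s0 * b) * (s2 * c)) = a^2 / (b * c)"
proof -
  have "(s1 * a)^2 = a^2" using assms(1) by (simp add: power_mult_distrib)
  moreover have "(s0 * b) * (s2 * c) = b * c" using assms(2)
    by (metis mult.assoc mult.left_commute mult_1)
  ultimately show ?thesis by simp
qed

lemma neg1_sq: "((-1::real) ^ p)^2 = 1"
  by (simp add: power2_eq_square power_mult_distrib[symmetric])

lemma ratio_eq: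
  "(psi2 (k + 3) x)\<^sup>2 / (psi2 (k + 3 - 1) x * psi2 (k + 3 + 1) x) = (NN (k + 1) x)^2 / (NN k x * NN (k + 2) x)"
proof -
  have e1: "k + 3 = (k + 1) + 2" "k + 3 - 1 = k + 2" "k + 3 + 1 = (k + 2) + 2" by simp_all
  have s: "((-1::real) ^ (k + 3)) * (-1) ^ (k + 2 + 3) = 1"
  proof -
    have "((-1::real) ^ (k + 2 + 3)) = (-1) ^ (k + 3) * (-1)^2"
      by (simp only: power_add[symmetric]) (simp add: algebra_simps)
    then show ?thesis using neg1_sq[of "k+3"] by (simp add: power2_eq_square)
  qed
  have a: "psi2 (k + 3) x = (-1) ^ (k + 1 + 3) * NN (k + 1) x"
    using psi2_NN[of "k + 1" x] by (simp only: e1(1)[symmetric])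
  have b: "psi2 (k + 3 - 1) x = (-1) ^ (k + 3) * NN k x"
    using psi2_NN[of k x] by (simp only: e1(2))
  have c: "psi2 (k + 3 + 1) x = (-1) ^ (k + 2 + 3) * NN (k + 2) x"
    using psi2_NN[of "k + 2" x] by (simp only: e1(3))
  show ?thesis unfolding a b c
    by (rule sign_alg[OF neg1_sq s])
qed

lemma fact_rel: "fact (k + 1) = (real k + 1) * (fact k :: real)"
  by (simp add: fact_Suc[of k, unfolded Suc_eq_plus1] )

lemma alg2:
  fixes F Y y k :: real
  assumes "0 < F" "0 < Y" "0 < y" "0 \<le> k"
  shows "((k+1)*F*(Y*y) + 2*((k+2)*((k+1)*F)*(Y*y*y)) + (k+3)*((k+2)*((k+1)*F))*(Y*y*y*y))^2
          / ((F*Y) * ((k+2)*((k+1)*F)*(Y*y*y)))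
        = (k+1)/(k+2) * (1 + 2*(k+2)*y + (k+2)*(k+3)*y^2)^2"
proof -
  define Z where "Z = (k+1)*F*(Y*y)"
  define P where "P = 1 + 2*(k+2)*y + (k+2)*(k+3)*y^2"
  have Z: "0 < Z" using assms by (simp add: Z_def)
  have h1: "(k+1)*F*(Y*y) + 2*((k+2)*((k+1)*F)*(Y*y*y)) + (k+3)*((k+2)*((k+1)*F))*(Y*y*y*y) = Z * P"
    by (simp add: Z_def P_def algebra_simps power2_eq_square)
  have h2: "(F*Y) * ((k+2)*((k+1)*F)*(Y*y*y)) = Z^2 * ((k+2) / (k+1))"
    using assms by (simp add: Z_def field_simps power2_eq_square)
  have h3: "(Z * P)^2 / (Z^2 * ((k+2) / (k+1))) = (k+1)/(k+2) * P^2"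
  proof -
    have "(Z * P)^2 / (Z^2 * ((k+2) / (k+1))) = P^2 / ((k+2) / (k+1))"
      using Z by (simp add: power_mult_distrib)
    also have "\<dots> = (k+1)/(k+2) * P^2" by simp
    finally show ?thesis .
  qed
  show ?thesis unfolding h1 h2 h3 by (simp add: P_def)
qed

lemma alg3:
  fixes A B C D E X3 X5 W :: real
  assumes "0 < X3" "0 < X5" "W^2 = X3 * X5" "0 < B" "0 < D" "0 \<le> C" "0 \<le> E"
  shows "(A / W)^2 / ((B / X3 + C) * (D / X5 + E)) = A^2 / ((B + C * X3) * (D + E * X5))"
proof -
  have W: "W \<noteq> 0" using assms by (metis mult_pos_pos power_zero_numeral less_irrefl)
  show ?thesis using assms W by (simp add: field_simps power2_eq_square)
qed


lemma alg4: "0 < (a::real) \<Longrightarrow> 0 < b \<Longrightarrow> 0 < c \<Longrightarrow> (a*c)^2/(c*(b*(a*c))) = a/b"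
  by (simp add: field_simps power2_eq_square)

theorem corollary3p3:
  fixes n :: nat
  assumes "n \<ge> 3"
  shows "(\<forall>x>0. (real n - 2) / (real n - 1) < (psi2 n x)\<^sup>2 / (psi2 (n - 1) x * psi2 (n + 1) x)
                 \<and> (psi2 n x)\<^sup>2 / (psi2 (n - 1) x * psi2 (n + 1) x) < real n / (real n + 1))
         \<and> (\<forall>c > (real n - 2) / (real n - 1). \<exists>x>0.
                 (psi2 n x)\<^sup>2 / (psi2 (n - 1) x * psi2 (n + 1) x) < c)
         \<and> (\<forall>c < real n / (real n + 1). \<exists>x>0.
                 c < (psi2 n x)\<^sup>2 / (psi2 (n - 1) x * psi2 (n + 1) x))"
proof -
  obtain k where n: "n = k + 3" using assms by (metis add.commute le_iff_add)
  have rn: "real n - 2 = real k + 1" "real n - 1 = real k + 2" "real n = real k + 3" "real n + 1 = real k + 4"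
    by (simp_all add: n)
  define R where "R x = (NN (k + 1) x)^2 / (NN k x * NN (k + 2) x)" for x
  have Req: "(psi2 n x)\<^sup>2 / (psi2 (n - 1) x * psi2 (n + 1) x) = R x" for x
    unfolding n R_def by (rule ratio_eq)
  define f2 where "f2 = (fact (k + 2) :: real)"
  have f2p: "0 < f2" by (simp add: f2_def)
  have fk1: "fact (k + 1) = (real k + 1) * (fact k :: real)" by (rule fact_rel)
  have fk2: "fact (k + 2) = (real k + 2) * ((real k + 1) * (fact k :: real))"
    using fact_rel[of "k + 1"] fk1 by (simp add: add.assoc eval_nat_numeral algebra_simps)
  have fk3: "fact (k + 3) = (real k + 3) * f2"
    using fact_rel[of "k + 2"] by (simp add: f2_def add.assoc eval_nat_numeral)
  have fk4: "fact (k + 4) = (real k + 4) * ((real k + 3) * f2)"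
    using fact_rel[of "k + 3"] fk3 by (simp add: add.assoc eval_nat_numeral)
  have lower: "(real k + 1) / (real k + 2) < R x" if x: "0 < x" for x
  proof -
    have "real (k + 1) * NN (k + 1 - 1) x * NN (k + 1 + 1) x < (real (k + 1) + 1) * (NN (k + 1) x)^2"
      by (rule chebyshev[OF x]) simp
    then have h: "(real k + 1) * (NN k x * NN (k + 2) x) < (NN (k + 1) x)^2 * (real k + 2)"
      by (simp add: algebra_simps)
    have p: "0 < NN k x * NN (k + 2) x" using NN_pos[OF x] by simp
    show ?thesis unfolding R_def using h p
      by (simp add: divide_less_eq less_divide_eq mult.commute[of _ "real k + 2"] pos_divide_less_eq pos_less_divide_eq)
  qed
  have upper: "R x < (real k + 3) / (real k + 4)" if x: "0 < x" for x
  proof -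
    define S3 where "S3 = SS (k + 3) x"
    define S4 where "S4 = SS (k + 4) x"
    define S5 where "S5 = SS (k + 5) x"
    have e: "k + 3 + 1 = k + 4" "k + 3 + 2 = k + 5" by simp_all
    have c: "S4^2 < S3 * S5" using cs[OF x, of "k + 3"] unfolding e S3_def S4_def S5_def by simp
    have N0: "NN k x = f2 * S3" by (simp add: NN_def f2_def S3_def)
    have N1: "NN (k + 1) x = (real k + 3) * f2 * S4"
      by (simp add: NN_def fk3[symmetric] S4_def add.assoc eval_nat_numeral)
    have N2: "NN (k + 2) x = (real k + 4) * ((real k + 3) * f2) * S5"
      by (simp add: NN_def fk4[symmetric] S5_def add.assoc eval_nat_numeral)
    define K where "K = (real k + 3)^2 * (real k + 4) * f2^2"
    have Kp: "0 < K" using f2p by (simp add: K_def)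
    have "K * S4^2 < K * (S3 * S5)" using c Kp by simp
    moreover have "(NN (k + 1) x)^2 * (real k + 4) = K * S4^2"
      unfolding N1 K_def by (simp add: power2_eq_square algebra_simps)
    moreover have "(real k + 3) * (NN k x * NN (k + 2) x) = K * (S3 * S5)"
      unfolding N0 N2 K_def by (simp add: power2_eq_square algebra_simps)
    ultimately have h: "(NN (k + 1) x)^2 * (real k + 4) < (real k + 3) * (NN k x * NN (k + 2) x)" by simp
    have p: "0 < NN k x * NN (k + 2) x" using NN_pos[OF x] by simp
    show ?thesis unfolding R_def using h p
      by (simp add: pos_divide_less_eq pos_less_divide_eq mult.commute[of _ "real k + 4"])
  qed
  have part2: "\<exists>x>0. R x < c" if c: "(real k + 1) / (real k + 2) < c" for c
  proof -
    define B where "B y = (real k + 1) / (real k + 2) * (1 + 2 * (real k + 2) * y + (real k + 2) * (real k + 3) * y^2)^2" for y :: real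
    have "(B \<longlongrightarrow> (real k + 1) / (real k + 2)) (at_right 0)"
      unfolding B_def by (auto intro!: tendsto_eq_intros)
    from ex_small_lt[OF this c] obtain y where y: "0 < y" "B y < c" by blast
    define x where "x = 1 / y"
    have x: "0 < x" using y by (simp add: x_def)
    have pw: "a / x ^ p = a * y ^ p" for a :: real and p
      by (simp add: x_def power_one_over)
    define F where "F = (fact k :: real)"
    define Y where "Y = y ^ (k + 1)"
    have Fp: "0 < F" by (simp add: F_def)
    have Yp: "0 < Y" using y by (simp add: Y_def)
    define U where "U = (real k+1)*F*(Y*y) + 2*((real k+2)*((real k+1)*F)*(Y*y*y)) + (real k+3)*((real k+2)*((real k+1)*F))*(Y*y*y*y)"
    define L0 where "L0 = F * Y"
    define L2 where "L2 = (real k+2)*((real k+1)*F)*(Y*y*y)"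
    have fk3': "fact (k + 3) = (real k+3)*((real k+2)*((real k+1)*F))"
      using fk3 fk2 by (simp add: F_def f2_def)
    have e2: "k + 1 + 1 = k + 2" "k + 1 + 2 = k + 3" by simp_all
    have t1: "fact (k + 1) * y ^ (k + 1 + 1) = (real k+1)*F*(Y*y)"
      unfolding fk1 F_def Y_def by (simp add: mult_ac)
    have t2: "fact (k + 1 + 1) * y ^ (k + 1 + 1 + 1) = (real k+2)*((real k+1)*F)*(Y*y*y)"
      unfolding e2 fk2 F_def Y_def by (simp add: mult_ac power_add power2_eq_square)
    have t3: "fact (k + 1 + 2) * y ^ (k + 1 + 2 + 1) = (real k+3)*((real k+2)*((real k+1)*F))*(Y*y*y*y)"
      unfolding e2 fk3' F_def Y_def by (simp add: mult_ac power_add power2_eq_square eval_nat_numeral)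
    have hU: "NN (k + 1) x \<le> U"
      using NN_upper1[OF x, of "k + 1"] unfolding pw t1 t2 t3 U_def .
    have hL0: "L0 \<le> NN k x"
      using NN_lower1[OF x, of k] unfolding pw L0_def F_def Y_def .
    have t4: "fact (k + 2) * y ^ (k + 2 + 1) = (real k+2)*((real k+1)*F)*(Y*y*y)"
      unfolding fk2 F_def Y_def by (simp add: mult_ac power_add power2_eq_square)
    have hL2: "L2 \<le> NN (k + 2) x"
      using NN_lower1[OF x, of "k + 2"] unfolding pw t4 L2_def .
    have L0p: "0 < L0" using Fp Yp by (simp add: L0_def)
    have L2p: "0 < L2" using Fp Yp y by (simp add: L2_def)
    have "R x \<le> U^2 / (L0 * L2)"
      unfolding R_def
    proof (rule frac_le)
      show "0 \<le> U^2" by simp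
      show "(NN (k + 1) x)^2 \<le> U^2" using hU NN_pos[OF x, of "k+1"] by (intro power_mono) auto
      show "0 < L0 * L2" using L0p L2p by simp
      show "L0 * L2 \<le> NN k x * NN (k + 2) x" using hL0 hL2 L0p L2p by (intro mult_mono) auto
    qed
    also have "U^2 / (L0 * L2) = B y"
      unfolding U_def L0_def L2_def B_def by (rule alg2[OF Fp Yp y(1)]) simp
    finally show ?thesis using x y by (intro exI[of _ x]) auto
  qed
  have part3: "\<exists>x>0. c < R x" if c: "c < (real k + 3) / (real k + 4)" for c
  proof -
    define C0 where "C0 = 2 * (fact k + 2 * fact (k + 1) + fact (k + 2) :: real)"
    define C2 where "C2 = 2 * (fact (k + 2) + 2 * fact (k + 3) + fact (k + 4) :: real)"
    have C0p: "0 \<le> C0" by (simp add: C0_def)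
    have C2p: "0 \<le> C2" by (simp add: C2_def)
    define B where "B x = (fact (k + 3))^2 / ((fact (k + 2) + C0 * x ^ (k + 3)) * (fact (k + 4) + C2 * x ^ (k + 5)))" for x :: real
    have "(B \<longlongrightarrow> (fact (k + 3))^2 / (fact (k + 2) * fact (k + 4))) (at_right 0)"
    proof -
      have z: "(0::real) ^ (k + 3) = 0" "(0::real) ^ (k + 5) = 0" by simp_all
      show ?thesis unfolding B_def by (auto intro!: tendsto_eq_intros simp: z)
    qed
    moreover have "(fact (k + 3) :: real)^2 / (fact (k + 2) * fact (k + 4)) = (real k + 3) / (real k + 4)"
      unfolding fk3 fk4 f2_def[symmetric] by (rule alg4) (use f2p in auto)
    ultimately have lim: "(B \<longlongrightarrow> (real k + 3) / (real k + 4)) (at_right 0)" by simp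
    from ex_small_gt[OF lim c] obtain x where x: "0 < x" "c < B x" by blast
    define L1 where "L1 = fact (k + 3) / x ^ (k + 4)"
    define U0 where "U0 = fact (k + 2) / x ^ (k + 3) + C0"
    define U2 where "U2 = fact (k + 4) / x ^ (k + 5) + C2"
    have hL1: "L1 \<le> NN (k + 1) x"
      using NN_lower2[OF x(1), of "k + 1"] by (simp add: L1_def eval_nat_numeral)
    have hU0: "NN k x \<le> U0"
      using NN_upper2[OF x(1), of k] by (simp add: U0_def C0_def)
    have hU2: "NN (k + 2) x \<le> U2"
      using NN_upper2[OF x(1), of "k + 2"] by (simp add: U2_def C2_def eval_nat_numeral)
    have L1p: "0 < L1" using x by (simp add: L1_def)
    have "L1^2 / (U0 * U2) \<le> R x"
      unfolding R_def
    proof (rule frac_le)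
      show "0 \<le> (NN (k + 1) x)^2" by simp
      show "L1^2 \<le> (NN (k + 1) x)^2" using hL1 L1p by (intro power_mono) auto
      show "0 < NN k x * NN (k + 2) x" using NN_pos[OF x(1)] by simp
      show "NN k x * NN (k + 2) x \<le> U0 * U2"
      proof -
        have a: "0 < NN k x" "0 < NN (k + 2) x" using NN_pos[OF x(1)] by auto
        show ?thesis by (rule mult_mono) (use hU0 hU2 a in linarith)+
      qed
    qed
    moreover have "L1^2 / (U0 * U2) = B x"
      unfolding L1_def U0_def U2_def B_def
    proof (rule alg3)
      show "(x ^ (k + 4))^2 = x ^ (k + 3) * x ^ (k + 5)"
        by (simp add: power_add[symmetric] power_mult[symmetric] eval_nat_numeral)
    qed (use x C0p C2p in auto)
    ultimately show ?thesis using x by (intro exI[of _ x]) auto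
  qed
  have A: "\<forall>x>0. (real k + 1) / (real k + 2) < R x \<and> R x < (real k + 3) / (real k + 4)"
    using lower upper by simp
  have B: "\<forall>c > (real k + 1) / (real k + 2). \<exists>x>0. R x < c"
    using part2 by simp
  have C: "\<forall>c < (real k + 3) / (real k + 4). \<exists>x>0. c < R x"
    using part3 by simp
  have q1: "(real k + 3 - 2) / (real k + 3 - 1) = (real k + 1) / (real k + 2)" by (simp add: add.commute)
  have q2: "(real k + 3) / (real k + 3 + 1) = (real k + 3) / (real k + 4)" by (simp add: add.commute)
  show ?thesis unfolding Req rn(3) q1 q2 using A B C by (intro conjI)
qed


end
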